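(* Let $\mathcal{S}$ be a finite set with $|\mathcal{S}| = S$, let $d_\pi$ be a categorical distribution on $\mathcal{S}$ (the state distribution induced by a policy $\pi$), and let $d_n$ be the empirical distribution obtained from $n$ independent samples drawn from $d_\pi$, i.e. $d_n(s) = \frac{1}{n}\sum_{j=1}^n \mathbf{1}(X_j = s)$ with $X_1,\dots,X_n$ i.i.d. with law $d_\pi$. Then, for any $\epsilon > 0$, $$\mathbb{P}\left( \mathcal H(d_\pi)-\mathcal H(d_n)>\epsilon \right) \leq 2S \exp\left(-n\frac{\epsilon^2\,\mathrm{Var}(d_\pi)}{2S^3\,\mathcal H^2(d_\pi)}\right),$$ where $\mathcal H(p) = -\sum_{s\in\mathcal S} p(s)\log p(s)$ is the Shannon entropy and $\mathrm{Var}(d_\pi) = \sum_{s\in\mathcal S} d_\pi(s)(1-d_\pi(s))$. Furthermore, to ensure this concentration with confidence $1-\delta$ (i.e. $\mathbb{P}( \mathcal H(d_\pi)-\mathcal H(d_n)>\epsilon ) \le \delta$), it suffices that the number of samples satisfies $$n \geq \frac{2S^3 \mathcal{H}^2(d_\pi)}{\epsilon^2 \mathrm{Var}(d_\pi)} \cdot \ln\frac{2S}{\delta}.$$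
   Context: $\mathcal H$ denotes Shannon entropy of a distribution on the finite set $\mathcal S$; $\mathrm{Var}(d_\pi)=\sum_{s} d_\pi(s)(1-d_\pi(s))$ is the (total) variance associated with the categorical distribution $d_\pi$. The samples are assumed independent. *)

theory Defs
  imports "HOL-Probability.Probability"
begin

text \<open>Shannon entropy (natural logarithm; note 0 * ln 0 = 0 in Isabelle) of a
  distribution on the finite type 'a, given by its probability mass function.\<close>
definition entropy :: "('a::finite \<Rightarrow> real) \<Rightarrow> real" where
  "entropy p = - (\<Sum>s\<in>UNIV. p s * ln (p s))"

definition cat_var :: "('a::finite \<Rightarrow> real) \<Rightarrow> real" where
  "cat_var p = (\<Sum>s\<in>UNIV. p s * (1 - p s))"

definition empirical :: "nat \<Rightarrow> (nat \<Rightarrow> 'a) \<Rightarrow> 'a \<Rightarrow> real" where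
  "empirical n X s = real (card {j\<in>{..<n}. X j = s}) / real n"

definition iid_sample :: "nat \<Rightarrow> 'a pmf \<Rightarrow> (nat \<Rightarrow> 'a) pmf" where
  "iid_sample n d = Pi_pmf {..<n} undefined (\<lambda>_. d)"

end

theory Submission
  imports Defs
begin

lemma binom_mgf:
  assumes p: "p \<in> {0..1}"
  shows "measure_pmf.expectation (binomial_pmf n p) (\<lambda>k. (z::real) ^ k) = (1 - p + p * z) ^ n"
proof -
  have "measure_pmf.expectation (binomial_pmf n p) (\<lambda>k. z ^ k) =
        (\<Sum>k\<le>n. real (n choose k) * (p * z) ^ k * (1 - p) ^ (n - k))"
    using p by (simp add: expectation_binomial_pmf' power_mult_distrib mult_ac)
  also have "\<dots> = (p * z + (1 - p)) ^ n"
    by (simp add: binomial_ring atLeast0AtMost)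
  finally show ?thesis by (simp add: add_ac)
qed

lemma binom_markov:
  assumes p: "p \<in> {0..1}"
  shows "measure_pmf.prob (binomial_pmf n p) {k. c \<le> t * real k}
           \<le> exp (- c) * (1 - p + p * exp t) ^ n"
proof -
  let ?B = "{k. c \<le> t * real k}"
  have "measure_pmf.prob (binomial_pmf n p) ?B =
        measure_pmf.expectation (binomial_pmf n p) (indicator ?B)"
    by simp
  also have "\<dots> \<le> measure_pmf.expectation (binomial_pmf n p) (\<lambda>k. exp (- c) * exp t ^ k)"
  proof (rule integral_mono)
    show "integrable (measure_pmf (binomial_pmf n p)) (indicator ?B :: nat \<Rightarrow> real)"
      using p by simp
    show "integrable (measure_pmf (binomial_pmf n p)) (\<lambda>k. exp (- c) * exp t ^ k)"
      using p by simp
    fix k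
    show "indicator ?B k \<le> exp (- c) * exp t ^ k"
    proof (cases "k \<in> ?B")
      case True
      then have "0 \<le> t * real k - c" by simp
      then have "1 \<le> exp (t * real k - c)" by simp
      also have "\<dots> = exp (- c) * exp t ^ k"
        by (simp add: exp_diff exp_of_nat_mult[symmetric] mult_ac exp_minus field_simps)
      finally show ?thesis using True by simp
    qed simp
  qed
  also have "\<dots> = exp (- c) * (1 - p + p * exp t) ^ n"
    using binom_mgf[OF p, of n "exp t"] by simp
  finally show ?thesis .
qed

lemma pow_le_exp:
  assumes "0 \<le> 1 + x"
  shows "(1 + x) ^ n \<le> exp (real n * x)"
proof -
  have "(1 + x) ^ n \<le> exp x ^ n"
    by (rule power_mono) (use assms in auto)
  then show ?thesis by (simp add: exp_of_nat_mult)
qed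

lemma exp_neg_bound:
  fixes l :: real
  assumes "0 \<le> l"
  shows "exp (- l) \<le> 1 - l + l\<^sup>2 / 2"
proof -
  have pos: "0 < 1 + l + l\<^sup>2 / 2" using assms by (simp add: add_pos_nonneg)
  have "exp (- l) = 1 / exp l" by (simp add: exp_minus field_simps)
  also have "\<dots> \<le> 1 / (1 + l + l\<^sup>2 / 2)"
    by (rule divide_left_mono) (use exp_lower_Taylor_quadratic[OF assms] pos in auto)
  also have "\<dots> \<le> 1 - l + l\<^sup>2 / 2"
  proof -
    have eq: "(1 - l + l\<^sup>2 / 2) * (1 + l + l\<^sup>2 / 2) = 1 + l ^ 4 / 4"
      by (simp add: power2_eq_square power4_eq_xxxx field_simps)
    have "1 \<le> (1 - l + l\<^sup>2 / 2) * (1 + l + l\<^sup>2 / 2)"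
      unfolding eq by simp
    then show ?thesis using pos by (simp add: divide_le_eq)
  qed
  finally show ?thesis .
qed

lemma chernoff_lower:
  assumes p: "0 < p" "p \<le> 1" and u: "0 \<le> u"
  shows "measure_pmf.prob (binomial_pmf n p) {k. real k \<le> real n * (p - u)}
           \<le> exp (- (real n * u\<^sup>2 / (2 * p)))"
proof -
  define l where "l = u / p"
  have l0: "0 \<le> l" using p u by (simp add: l_def)
  have pp: "p \<in> {0..1}" using p by simp
  have sub: "{k. real k \<le> real n * (p - u)} \<subseteq> {k. - l * (real n * (p - u)) \<le> - l * real k}"
    using l0 by (auto intro: mult_left_mono)
  have "measure_pmf.prob (binomial_pmf n p) {k. real k \<le> real n * (p - u)}
        \<le> measure_pmf.prob (binomial_pmf n p) {k. - l * (real n * (p - u)) \<le> - l * real k}"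
    by (rule measure_pmf.finite_measure_mono[OF sub]) simp
  also have "\<dots> \<le> exp (l * (real n * (p - u))) * (1 - p + p * exp (- l)) ^ n"
    using binom_markov[OF pp, of n "- l * (real n * (p - u))" "- l"] by simp
  also have "(1 - p + p * exp (- l)) ^ n \<le> exp (real n * (p * (exp (- l) - 1)))"
  proof -
    have "0 \<le> 1 + p * (exp (- l) - 1)"
    proof -
      have "0 \<le> (1 - p) + p * exp (- l)" using p by simp
      then show ?thesis by (simp add: algebra_simps)
    qed
    from pow_le_exp[OF this, of n] show ?thesis by (simp add: algebra_simps)
  qed
  also have "exp (l * (real n * (p - u))) * exp (real n * (p * (exp (- l) - 1)))
           = exp (real n * (l * (p - u) + p * (exp (- l) - 1)))"
    by (simp add: exp_add[symmetric] algebra_simps)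
  also have "\<dots> \<le> exp (real n * (l * (p - u) + p * (- l + l\<^sup>2 / 2)))"
    using exp_neg_bound[OF l0] p by (intro exp_mono mult_left_mono add_left_mono) auto
  also have "real n * (l * (p - u) + p * (- l + l\<^sup>2 / 2)) = - (real n * u\<^sup>2 / (2 * p))"
    using p by (simp add: l_def field_simps power2_eq_square)
  finally show ?thesis
    by (simp add: mult_left_mono)
qed

lemma chernoff_upper:
  assumes p: "0 \<le> p" "p \<le> 1" and u: "0 \<le> u" and l: "0 \<le> l"
  shows "measure_pmf.prob (binomial_pmf n p) {k. real n * (p + u) \<le> real k}
           \<le> exp (real n * (- l * u + p * (exp l - 1 - l)))"
proof -
  have pp: "p \<in> {0..1}" using p by simp
  have sub: "{k. real n * (p + u) \<le> real k} \<subseteq> {k. l * (real n * (p + u)) \<le> l * real k}"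
    using l by (auto intro: mult_left_mono)
  have "measure_pmf.prob (binomial_pmf n p) {k. real n * (p + u) \<le> real k}
        \<le> measure_pmf.prob (binomial_pmf n p) {k. l * (real n * (p + u)) \<le> l * real k}"
    by (rule measure_pmf.finite_measure_mono[OF sub]) simp
  also have "\<dots> \<le> exp (- (l * (real n * (p + u)))) * (1 - p + p * exp l) ^ n"
    using binom_markov[OF pp, of n "l * (real n * (p + u))" l] by simp
  also have "(1 - p + p * exp l) ^ n \<le> exp (real n * (p * (exp l - 1)))"
  proof -
    have "0 \<le> 1 + p * (exp l - 1)"
      using p l by simp
    from pow_le_exp[OF this, of n] show ?thesis by (simp add: algebra_simps)
  qed
  also have "exp (- (l * (real n * (p + u)))) * exp (real n * (p * (exp l - 1)))
           = exp (real n * (- l * u + p * (exp l - 1 - l)))"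
    by (simp add: exp_add[symmetric] algebra_simps)
  finally show ?thesis
    by (simp add: mult_left_mono)
qed

lemma bernoulli_map:
  "map_pmf (\<lambda>x. x \<in> A) d = bernoulli_pmf (measure_pmf.prob d A)"
proof (rule pmf_eqI)
  fix b :: bool
  show "pmf (map_pmf (\<lambda>x. x \<in> A) d) b = pmf (bernoulli_pmf (measure_pmf.prob d A)) b"
  proof (cases b)
    case True
    then have "(\<lambda>x. x \<in> A) -` {b} = A" by auto
    then show ?thesis using True by (simp add: pmf_map)
  next
    case False
    then have "(\<lambda>x. x \<in> A) -` {b} = - A" by auto
    then show ?thesis using False
      by (simp add: pmf_map measure_pmf.prob_compl[symmetric] Compl_eq_Diff_UNIV)
  qed
qed

lemma count_binomial:
  "map_pmf (\<lambda>X. card {j\<in>{..<n}. X j \<in> A}) (iid_sample n d)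
     = binomial_pmf n (measure_pmf.prob d A)"
proof -
  have pp: "measure_pmf.prob d A \<in> {0..1}" by simp
  have "binomial_pmf n (measure_pmf.prob d A) =
        map_pmf (\<lambda>f. card {x\<in>{..<n}. f x})
          (Pi_pmf {..<n} (undefined \<in> A) (\<lambda>_. bernoulli_pmf (measure_pmf.prob d A)))"
    by (rule binomial_pmf_altdef'[OF _ _ pp]) auto
  also have "Pi_pmf {..<n} (undefined \<in> A) (\<lambda>_. bernoulli_pmf (measure_pmf.prob d A))
           = Pi_pmf {..<n} (undefined \<in> A) (\<lambda>_. map_pmf (\<lambda>x. x \<in> A) d)"
    by (simp add: bernoulli_map)
  also have "\<dots> = map_pmf (\<lambda>h. (\<lambda>x. x \<in> A) \<circ> h) (Pi_pmf {..<n} undefined (\<lambda>_. d))"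
    by (rule Pi_pmf_map) auto
  finally show ?thesis
    by (simp add: iid_sample_def pmf.map_comp o_def)
qed

lemma prob_count:
  "measure_pmf.prob (iid_sample n d) {X. P (card {j\<in>{..<n}. X j \<in> A})}
     = measure_pmf.prob (binomial_pmf n (measure_pmf.prob d A)) {k. P k}"
proof -
  have "measure_pmf.prob (binomial_pmf n (measure_pmf.prob d A)) {k. P k}
        = measure_pmf.prob (map_pmf (\<lambda>X. card {j\<in>{..<n}. X j \<in> A}) (iid_sample n d)) {k. P k}"
    by (simp only: count_binomial)
  also have "\<dots> = measure_pmf.prob (iid_sample n d) ((\<lambda>X. card {j\<in>{..<n}. X j \<in> A}) -` {k. P k})"
    by (rule measure_map_pmf)
  also have "(\<lambda>X. card {j\<in>{..<n}. X j \<in> A}) -` {k. P k} = {X. P (card {j\<in>{..<n}. X j \<in> A})}"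
    by (rule vimage_Collect_eq)
  finally show ?thesis by simp
qed

lemma phi_mono:
  fixes a b :: real
  assumes "0 < a" "a \<le> b" "b \<le> exp (-1)"
  shows "- (a * ln a) \<le> - (b * ln b)"
proof -
  have b0: "0 < b" using assms by simp
  have lb: "ln b \<le> -1" using assms b0 by (metis ln_exp ln_le_cancel_iff exp_gt_zero)
  have "ln b - ln a = ln (b / a)" using assms b0 by (simp add: ln_div)
  also have "\<dots> \<le> b / a - 1" using assms b0 by (intro ln_le_minus_one) simp
  finally have q: "a * (ln b - ln a) \<le> b - a" using assms by (simp add: field_simps)
  have "(b - a) * 1 \<le> (b - a) * (- ln b)"
    using lb assms by (intro mult_left_mono) auto
  then show ?thesis using q by (simp add: algebra_simps)
qed

lemma phi_le:
  fixes y :: real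
  assumes "0 < y"
  shows "- (y * ln y) \<le> exp (-1)"
proof -
  have pos: "0 < 1 / (exp 1 * y)" using assms by simp
  have "ln (1 / (exp 1 * y)) \<le> 1 / (exp 1 * y) - 1" by (rule ln_le_minus_one[OF pos])
  also have "ln (1 / (exp 1 * y)) = - 1 - ln y" using assms by (simp add: ln_div ln_mult)
  finally have "- ln y \<le> 1 / (exp 1 * y)" by simp
  then have "y * (- ln y) \<le> y * (1 / (exp 1 * y))" using assms by (intro mult_left_mono) auto
  then show ?thesis using assms by (simp add: exp_minus field_simps)
qed

lemma phi_nonneg:
  fixes y :: real
  assumes "0 \<le> y" "y \<le> 1"
  shows "0 \<le> - (y * ln y)"
proof (cases "y = 0")
  case False
  then have "ln y \<le> 0" using assms by simp
  then show ?thesis using assms by (simp add: mult_nonneg_nonpos)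
qed simp

lemma f_eq:
  fixes x :: real
  assumes "0 < x"
  shows "x * (ln x)\<^sup>2 = 4 * (- (sqrt x * ln (sqrt x)))\<^sup>2"
  using assms by (simp add: ln_sqrt power_mult_distrib power2_eq_square field_simps)

lemma f_mono:
  fixes a b :: real
  assumes "0 < a" "a \<le> b" "b \<le> exp (-2)"
  shows "a * (ln a)\<^sup>2 \<le> b * (ln b)\<^sup>2"
proof -
  have e: "sqrt (exp (-2)) = exp (-1)"
    by (metis exp_ge_zero real_sqrt_unique exp_add[symmetric] power2_eq_square
        add.inverse_inverse numeral_One one_add_one minus_add_distrib)
  have sb: "sqrt b \<le> exp (-1)" using assms e real_sqrt_le_mono by metis
  have 1: "- (sqrt a * ln (sqrt a)) \<le> - (sqrt b * ln (sqrt b))"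
    using assms sb by (intro phi_mono) auto
  have "exp (-2::real) \<le> 1" by simp
  then have a1: "a \<le> 1" using assms by linarith
  have 0: "0 \<le> - (sqrt a * ln (sqrt a))"
    using assms a1 by (intro phi_nonneg) auto
  have "(- (sqrt a * ln (sqrt a)))\<^sup>2 \<le> (- (sqrt b * ln (sqrt b)))\<^sup>2"
    using 0 1 by (intro power_mono) auto
  then show ?thesis using assms by (simp add: f_eq)
qed

lemma f_max:
  fixes x :: real
  assumes "0 < x" "x \<le> 1"
  shows "x * (ln x)\<^sup>2 \<le> 4 * exp (-2)"
proof -
  have 0: "0 \<le> - (sqrt x * ln (sqrt x))"
    using assms by (intro phi_nonneg) auto
  have 1: "- (sqrt x * ln (sqrt x)) \<le> exp (-1)"
    using assms by (intro phi_le) auto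
  have "(- (sqrt x * ln (sqrt x)))\<^sup>2 \<le> (exp (-1))\<^sup>2"
    using 0 1 by (intro power_mono) auto
  also have "(exp (-1::real))\<^sup>2 = exp (-2)"
    by (simp add: power2_eq_square exp_add[symmetric])
  finally show ?thesis using assms by (simp add: f_eq)
qed

context
  fixes P :: "'a::finite \<Rightarrow> real" and t0 :: 'a
  assumes nn: "\<And>t. 0 \<le> P t" and sum1: "(\<Sum>t\<in>UNIV. P t) = 1"
    and mx: "\<And>t. P t \<le> P t0"
begin

lemma P_le1: "P t \<le> 1"
proof -
  have "P t \<le> (\<Sum>t\<in>UNIV. P t)" by (rule member_le_sum) (auto simp: nn)
  then show ?thesis using sum1 by simp
qed

lemma H_alt: "entropy P = (\<Sum>t\<in>UNIV. - (P t * ln (P t)))"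
  by (simp add: entropy_def sum_negf)

lemma term_nonneg: "0 \<le> - (P t * ln (P t))"
  using nn P_le1 by (intro phi_nonneg) auto

lemma term_nonpos: "P t * ln (P t) \<le> 0"
  using term_nonneg[of t] by simp

lemma H_nonneg: "0 \<le> entropy P"
  unfolding H_alt by (intro sum_nonneg term_nonneg)

lemma term_le_H: "- (P s * ln (P s)) \<le> entropy P"
  unfolding H_alt by (rule member_le_sum) (auto simp: term_nonpos)

lemma V_le_H: "cat_var P \<le> entropy P"
  unfolding H_alt cat_var_def
proof (rule sum_mono)
  fix t
  show "P t * (1 - P t) \<le> - (P t * ln (P t))"
  proof (cases "P t = 0")
    case False
    then have "0 < P t" using nn[of t] by simp
    then have "ln (P t) \<le> P t - 1" by (rule ln_le_minus_one)
    then have "P t * ln (P t) \<le> P t * (P t - 1)" using nn[of t] by (intro mult_left_mono)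
    then show ?thesis by (simp add: algebra_simps)
  qed simp
qed

lemma V_nonneg: "0 \<le> cat_var P"
  unfolding cat_var_def using nn P_le1 by (intro sum_nonneg) simp

lemma M_pos: "0 < P t0"
proof (rule ccontr)
  assume "\<not> 0 < P t0"
  then have "\<And>t. P t = 0" using nn mx by (meson antisym not_less order_trans)
  then show False using sum1 by simp
qed

lemma H_ge_lnM: "- ln (P t0) \<le> entropy P"
proof -
  have "- ln (P t0) = (\<Sum>t\<in>UNIV. P t * (- ln (P t0)))"
  proof -
    have "(\<Sum>t\<in>UNIV. P t * (- ln (P t0))) = (\<Sum>t\<in>UNIV. P t) * (- ln (P t0))"
      by (rule sum_distrib_right[symmetric])
    then show ?thesis using sum1 by simp
  qed
  also have "\<dots> \<le> (\<Sum>t\<in>UNIV. - (P t * ln (P t)))"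
  proof (rule sum_mono)
    fix t
    show "P t * (- ln (P t0)) \<le> - (P t * ln (P t))"
    proof (cases "P t = 0")
      case False
      then have "0 < P t" using nn[of t] by simp
      then have "ln (P t) \<le> ln (P t0)" using mx[of t] by simp
      then show ?thesis using nn[of t] by (simp add: mult_left_mono)
    qed simp
  qed
  finally show ?thesis by (simp add: H_alt)
qed

definition "mm = 1 - P t0"

lemma mm_sum: "mm = (\<Sum>t\<in>UNIV - {t0}. P t)"
proof -
  have "(\<Sum>t\<in>UNIV. P t) = P t0 + (\<Sum>t\<in>UNIV - {t0}. P t)"
    by (simp add: sum.remove)
  then show ?thesis using sum1 by (simp add: mm_def)
qed

lemma mm_nonneg: "0 \<le> mm"
  unfolding mm_sum by (intro sum_nonneg nn)

lemma le_mm: "t \<noteq> t0 \<Longrightarrow> P t \<le> mm"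
  unfolding mm_sum by (rule member_le_sum) (auto simp: nn)

lemma mm_lt1: "mm < 1" using M_pos by (simp add: mm_def)

lemma H_ge_phi_mm: "- (mm * ln mm) \<le> entropy P"
proof -
  have "- (mm * ln mm) = (\<Sum>t\<in>UNIV - {t0}. P t * (- ln mm))"
  proof -
    have "(\<Sum>t\<in>UNIV - {t0}. P t * (- ln mm)) = (\<Sum>t\<in>UNIV - {t0}. P t) * (- ln mm)"
      by (rule sum_distrib_right[symmetric])
    then show ?thesis by (simp add: mm_sum[symmetric])
  qed
  also have "\<dots> \<le> (\<Sum>t\<in>UNIV - {t0}. - (P t * ln (P t)))"
  proof (rule sum_mono)
    fix t assume "t \<in> UNIV - {t0}"
    then have tm: "P t \<le> mm" using le_mm by simp
    show "P t * (- ln mm) \<le> - (P t * ln (P t))"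
    proof (cases "P t = 0")
      case False
      then have "0 < P t" using nn[of t] by simp
      then have "ln (P t) \<le> ln mm" using tm by simp
      then show ?thesis using nn[of t] by (simp add: mult_left_mono)
    qed simp
  qed
  also have "\<dots> \<le> (\<Sum>t\<in>UNIV. - (P t * ln (P t)))"
    by (rule sum_mono2) (auto simp: term_nonpos)
  finally show ?thesis by (simp add: H_alt)
qed

lemma V_split: "cat_var P = P t0 * mm + (\<Sum>t\<in>UNIV - {t0}. P t * (1 - P t))"
  unfolding cat_var_def mm_def by (simp add: sum.remove)

lemma V_le_2mm: "cat_var P \<le> 2 * mm"
proof -
  have "(\<Sum>t\<in>UNIV - {t0}. P t * (1 - P t)) \<le> (\<Sum>t\<in>UNIV - {t0}. P t)"
    by (rule sum_mono) (use nn in \<open>simp add: mult_left_le\<close>)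
  moreover have "P t0 * mm \<le> mm" using mm_nonneg P_le1[of t0] nn[of t0] by (simp add: mult_left_le_one_le)
  ultimately show ?thesis using V_split mm_sum by simp
qed

lemma pair_le: "t \<noteq> t0 \<Longrightarrow> P t + P t0 \<le> 1"
proof -
  assume "t \<noteq> t0"
  then have "(\<Sum>u\<in>{t, t0}. P u) \<le> (\<Sum>u\<in>UNIV. P u)"
    by (intro sum_mono2) (auto simp: nn)
  then show ?thesis using \<open>t \<noteq> t0\<close> sum1 by simp
qed

lemma V_ge: "2 * P t0 * mm \<le> cat_var P"
proof -
  have "(\<Sum>t\<in>UNIV - {t0}. P t * P t0) \<le> (\<Sum>t\<in>UNIV - {t0}. P t * (1 - P t))"
  proof (rule sum_mono)
    fix t assume "t \<in> UNIV - {t0}"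
    then have "P t0 \<le> 1 - P t" using pair_le[of t] by simp
    then show "P t * P t0 \<le> P t * (1 - P t)" using nn[of t] by (rule mult_left_mono)
  qed
  moreover have "(\<Sum>t\<in>UNIV - {t0}. P t * P t0) = mm * P t0"
    by (simp add: mm_sum sum_distrib_right)
  ultimately show ?thesis using V_split by (simp add: algebra_simps)
qed

lemma SM_ge1: "1 \<le> real CARD('a) * P t0"
proof -
  have "(\<Sum>t\<in>UNIV. P t) \<le> (\<Sum>t\<in>(UNIV::'a set). P t0)" by (rule sum_mono) (rule mx)
  then show ?thesis using sum1 by simp
qed

lemma key_U: "2 * mm * cat_var P \<le> real CARD('a) * (entropy P)\<^sup>2"
proof -
  let ?V = "cat_var P" and ?H = "entropy P" and ?S = "real CARD('a)"
  have "2 * mm \<le> ?S * ?V"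
  proof -
    have "2 * mm = 2 * mm * 1" by simp
    also have "\<dots> \<le> 2 * mm * (?S * P t0)" using SM_ge1 mm_nonneg by (intro mult_left_mono) auto
    also have "\<dots> = ?S * (2 * P t0 * mm)" by simp
    also have "\<dots> \<le> ?S * ?V" using V_ge by (intro mult_left_mono) auto
    finally show ?thesis .
  qed
  then have "2 * mm * ?V \<le> ?S * ?V * ?V" using V_nonneg by (intro mult_right_mono) auto
  also have "\<dots> \<le> ?S * ?H * ?H"
    using V_le_H V_nonneg by (intro mult_mono mult_left_mono) auto
  finally show ?thesis by (simp add: power2_eq_square mult_ac)
qed


lemma S_ge2:
  assumes "0 < P s" "P s < 1"
  shows "2 \<le> real CARD('a)"
proof -
  have "\<exists>t. t \<noteq> s \<and> 0 < P t"
  proof (rule ccontr)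
    assume "\<not> ?thesis"
    then have z: "\<And>t. t \<noteq> s \<Longrightarrow> P t = 0" using nn by (metis less_eq_real_def)
    have "(\<Sum>t\<in>UNIV. P t) = P s + (\<Sum>t\<in>UNIV - {s}. P t)" by (simp add: sum.remove)
    also have "(\<Sum>t\<in>UNIV - {s}. P t) = 0" using z by simp
    finally show False using sum1 assms by simp
  qed
  then obtain t where "t \<noteq> s" by blast
  then have "card {s, t} \<le> CARD('a)" by (intro card_mono) auto
  then show ?thesis using \<open>t \<noteq> s\<close> by simp
qed

lemma exp2_small: "exp (-2::real) < 1/2"
proof -
  have "3 \<le> exp (2::real)" using exp_ge_add_one_self[of 2] by simp
  then have "2 < exp (2::real)" by simp
  then show ?thesis by (simp add: exp_minus field_simps)
qed

lemma exp2_le_exp1: "2 * exp (-2::real) \<le> exp (-1)"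
proof -
  have "2 \<le> exp (1::real)" using exp_ge_add_one_self[of 1] by simp
  then have "2 * exp (-2::real) \<le> exp 1 * exp (-2)" by (intro mult_right_mono) auto
  also have "exp 1 * exp (-2) = exp (-1::real)" by (simp add: exp_add[symmetric])
  finally show ?thesis .
qed

lemma key_I:
  assumes xs: "0 < P s" "P s < 1"
  shows "P s * (ln (P s))\<^sup>2 * cat_var P \<le> real CARD('a) * (entropy P)\<^sup>2"
proof -
  let ?x = "P s" and ?V = "cat_var P" and ?H = "entropy P" and ?S = "real CARD('a)"
  have S2: "2 \<le> ?S" using S_ge2[OF xs] .
  have H0: "0 \<le> ?H" by (rule H_nonneg)
  have V0: "0 \<le> ?V" by (rule V_nonneg)
  have HH: "2 * ?H * ?H \<le> ?S * ?H\<^sup>2"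
    using S2 H0 by (simp add: power2_eq_square mult_right_mono mult.assoc)
  have HV: "2 * ?H * ?V \<le> 2 * ?H * ?H"
    using V_le_H H0 by (intro mult_left_mono) auto
  show ?thesis
  proof (cases "exp (-2) \<le> ?x")
    case True
    have "ln (exp (-2)) \<le> ln ?x" using True xs by (subst ln_le_cancel_iff) auto
    then have l2: "- ln ?x \<le> 2" by simp
    have l0: "0 \<le> - ln ?x" using xs by simp
    have f: "?x * (ln ?x)\<^sup>2 = (- ln ?x) * (- (?x * ln ?x))" by (simp add: power2_eq_square)
    have "?x * (ln ?x)\<^sup>2 \<le> 2 * ?H"
      unfolding f using l2 l0 term_le_H[of s] term_nonneg[of s] by (intro mult_mono) auto
    then have "?x * (ln ?x)\<^sup>2 * ?V \<le> 2 * ?H * ?V" using V0 by (intro mult_right_mono)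
    then show ?thesis using HV HH by linarith
  next
    case False
    then have xl: "?x < exp (-2)" by simp
    show ?thesis
    proof (cases "mm \<le> exp (-2)")
      case True
      have "s \<noteq> t0"
      proof
        assume "s = t0"
        then have "mm = 1 - ?x" by (simp add: mm_def)
        then show False using True xl exp2_small by linarith
      qed
      then have xm: "?x \<le> mm" by (rule le_mm)
      have fm: "?x * (ln ?x)\<^sup>2 \<le> mm * (ln mm)\<^sup>2"
        using xs xm True by (intro f_mono) auto
      have "?x * (ln ?x)\<^sup>2 * ?V \<le> mm * (ln mm)\<^sup>2 * (2 * mm)"
        by (rule mult_mono[OF fm V_le_2mm]) (use mm_nonneg V0 in auto)
      also have "\<dots> = 2 * (- (mm * ln mm))\<^sup>2" by (simp add: power2_eq_square)
      also have "\<dots> \<le> 2 * ?H\<^sup>2"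
      proof -
        have "0 \<le> - (mm * ln mm)" using mm_nonneg mm_lt1 by (intro phi_nonneg) auto
        then have "(- (mm * ln mm))\<^sup>2 \<le> ?H\<^sup>2" using H_ge_phi_mm by (intro power_mono)
        then show ?thesis by simp
      qed
      also have "\<dots> \<le> ?S * ?H\<^sup>2" using S2 by (intro mult_right_mono) auto
      finally show ?thesis .
    next
      case False
      then have mb: "exp (-2) < mm" by simp
      have Hb: "2 * exp (-2) \<le> ?H"
      proof (cases "2 * exp (-2) \<le> mm")
        case True
        have pm: "P t0 = 1 - mm" by (simp add: mm_def)
        have "ln (1 - mm) \<le> (1 - mm) - 1" using mm_lt1 by (intro ln_le_minus_one) simp
        then have "mm \<le> - ln (P t0)" using pm by simp
        then show ?thesis using True H_ge_lnM by linarith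
      next
        case False
        have e: "- (exp (-2) * ln (exp (-2::real))) = 2 * exp (-2)" by simp
        have "- (exp (-2) * ln (exp (-2::real))) \<le> - (mm * ln mm)"
          using mb False exp2_le_exp1 by (intro phi_mono) auto
        then show ?thesis using e H_ge_phi_mm by linarith
      qed
      have "?x * (ln ?x)\<^sup>2 \<le> 4 * exp (-2)" using xs by (intro f_max) auto
      then have "?x * (ln ?x)\<^sup>2 * ?V \<le> 4 * exp (-2) * ?V" using V0 by (intro mult_right_mono)
      also have "\<dots> = 2 * (2 * exp (-2)) * ?V" by simp
      also have "\<dots> \<le> 2 * ?H * ?V" using Hb V0 by (intro mult_right_mono) auto
      finally show ?thesis using HV HH by linarith
    qed
  qed
qed

end

lemma D_upper:
  fixes p q :: real
  assumes "0 \<le> p" "p \<le> q" "q \<le> 1"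
  shows "q * ln q - p * ln p \<le> q - p"
proof (cases "p = 0")
  case True
  have "q * ln q \<le> 0" using phi_nonneg[of q] assms by simp
  then show ?thesis using True assms by simp
next
  case False
  then have p0: "0 < p" using assms by simp
  then have q0: "0 < q" using assms by simp
  have "ln q \<le> 0" using q0 assms by simp
  then have 1: "(q - p) * ln q \<le> 0" using assms by (simp add: mult_nonneg_nonpos)
  have "ln q - ln p = ln (q / p)" using p0 q0 by (simp add: ln_div)
  also have "\<dots> \<le> q / p - 1" using p0 q0 by (intro ln_le_minus_one) simp
  finally have 2: "p * (ln q - ln p) \<le> q - p" using p0 by (simp add: field_simps)
  have "q * ln q - p * ln p = (q - p) * ln q + p * (ln q - ln p)" by (simp add: algebra_simps)
  then show ?thesis using 1 2 by linarith
qed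

lemma D_lower:
  fixes p q :: real
  assumes "0 \<le> q" "q \<le> p"
  shows "q * ln q - p * ln p \<le> - ((p - q) * ln p)"
proof -
  have "q * ln q \<le> q * ln p"
  proof (cases "q = 0")
    case False
    then have "0 < q" using assms by simp
    then have "ln q \<le> ln p" using assms by simp
    then show ?thesis using assms by (simp add: mult_left_mono)
  qed simp
  then show ?thesis by (simp add: algebra_simps)
qed

lemma cross:
  fixes x y b c :: real
  assumes "0 < b" "0 < c" "x * c \<le> y * b"
  shows "x / b \<le> y / c"
  using assms by (simp add: divide_simps)

lemma card_count_le: "card {j\<in>{..<n}. X j = s} \<le> n"
proof -
  have "card {j\<in>{..<n}. X j = s} \<le> card {..<n}" by (intro card_mono) auto
  then show ?thesis by simp
qed

lemma empirical_bounds: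
  assumes "n > 0"
  shows "0 \<le> empirical n X s" "empirical n X s \<le> 1"
  using card_count_le[of n X s] assms by (auto simp: empirical_def divide_simps)

lemma entropy_empirical_nonneg:
  assumes "n > 0"
  shows "0 \<le> entropy (empirical n X)"
proof -
  have "0 \<le> (\<Sum>s\<in>UNIV. - (empirical n X s * ln (empirical n X s)))"
    using empirical_bounds[OF assms] by (intro sum_nonneg phi_nonneg) auto
  then show ?thesis by (simp add: entropy_def sum_negf)
qed

lemma prob_single:
  "measure_pmf.prob (iid_sample n d) {X. Q (card {j\<in>{..<n}. X j = s})}
     = measure_pmf.prob (binomial_pmf n (pmf d s)) {k. Q k}"
  using prob_count[of n d Q "{s}"] by (simp add: measure_pmf_single)

lemma prob_compl_count:
  "measure_pmf.prob (iid_sample n d) {X. Q (n - card {j\<in>{..<n}. X j = s})}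
     = measure_pmf.prob (binomial_pmf n (1 - pmf d s)) {k. Q k}"
proof -
  have c: "card {j\<in>{..<n}. X j \<in> - {s}} = n - card {j\<in>{..<n}. X j = s}" for X
  proof -
    have "{j\<in>{..<n}. X j \<in> - {s}} = {..<n} - {j\<in>{..<n}. X j = s}" by auto
    moreover have "card ({..<n} - {j\<in>{..<n}. X j = s}) = card {..<n} - card {j\<in>{..<n}. X j = s}"
      by (rule card_Diff_subset) auto
    ultimately show ?thesis by simp
  qed
  have p: "measure_pmf.prob d (- {s}) = 1 - pmf d s"
    using measure_pmf.prob_compl[of "{s}" d] by (simp add: measure_pmf_single Compl_eq_Diff_UNIV)
  show ?thesis using prob_count[of n d Q "- {s}"] by (simp only: c p)
qed

lemma core:
  fixes d :: "'a::finite pmf" and n :: nat and \<epsilon> :: real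
  assumes n0: "n > 0" and e0: "\<epsilon> > 0" and eH: "\<epsilon> < entropy (pmf d)"
  shows "measure_pmf.prob (iid_sample n d)
           {X. entropy (pmf d) - entropy (empirical n X) > \<epsilon>}
         \<le> 2 * real CARD('a) * exp (- real n * (\<epsilon>\<^sup>2 * cat_var (pmf d))
                 / (2 * real CARD('a) ^ 3 * (entropy (pmf d))\<^sup>2))"
proof -
  define P where "P = pmf d"
  define H where "H = entropy P"
  define V where "V = cat_var P"
  define S where "S = real CARD('a)"
  define \<delta> where "\<delta> = \<epsilon> / S"
  define \<beta> where "\<beta> = \<delta>\<^sup>2 * V / (2 * S * H\<^sup>2)"
  have nn: "\<And>t. 0 \<le> P t" by (simp add: P_def)
  have sum1: "(\<Sum>t\<in>UNIV. P t) = 1" unfolding P_def by (rule sum_pmf_eq_1) auto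
  obtain t0 where mx: "\<And>t. P t \<le> P t0"
  proof -
    have "Max (range P) \<in> range P" by (intro Max_in) auto
    then obtain t0 where "P t0 = Max (range P)" by (metis imageE)
    moreover have "\<And>t. P t \<le> Max (range P)" by (intro Max_ge) auto
    ultimately show ?thesis using that by metis
  qed
  note F = P_le1[OF nn sum1 mx] term_nonneg[OF nn sum1 mx] H_nonneg[OF nn sum1 mx]
     V_le_H[OF nn sum1 mx] V_nonneg[OF nn sum1 mx] le_mm[OF nn sum1 mx] mm_nonneg[OF nn sum1 mx]
     V_le_2mm[OF nn sum1 mx] key_U[OF nn sum1 mx] key_I[OF nn sum1 mx] mm_def[OF nn sum1 mx]
  define m where "m = mm P t0"
  have S1: "1 \<le> S" by (simp add: S_def Suc_le_eq)
  have H0: "0 < H" using e0 eH by (simp add: H_def P_def)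
  have V0: "0 < V"
  proof (rule ccontr)
    assume "\<not> 0 < V"
    then have "V = 0" using F(5) by (simp add: V_def)
    then have z: "\<forall>t\<in>UNIV. P t * (1 - P t) = 0"
      unfolding V_def cat_var_def using nn F(1)
      by (subst sum_nonneg_eq_0_iff[symmetric]) auto
    have z1: "\<And>t. P t * ln (P t) = 0"
    proof -
      fix t
      have "P t = 0 \<or> P t = 1" using z by auto
      then show "P t * ln (P t) = 0" by auto
    qed
    have "(\<Sum>t\<in>UNIV. P t * ln (P t)) = 0" by (rule sum.neutral) (use z1 in blast)
    then have "H = 0" by (simp add: H_def entropy_def)
    then show False using H0 by simp
  qed
  have m0: "0 < m"
  proof -
    have "V \<le> 2 * m" using F(8) by (simp add: V_def m_def)
    then show ?thesis using V0 by simp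
  qed
  have \<delta>0: "0 < \<delta>" using e0 S1 by (simp add: \<delta>_def)
  have \<delta>H: "\<delta> \<le> H"
  proof -
    have "\<delta> \<le> \<epsilon>" using e0 S1 by (simp add: \<delta>_def divide_le_eq)
    then show ?thesis using eH by (simp add: H_def P_def)
  qed
  have \<beta>eq: "- real n * (\<epsilon>\<^sup>2 * cat_var (pmf d)) / (2 * real CARD('a) ^ 3 * (entropy (pmf d))\<^sup>2)
            = - (real n * \<beta>)"
    using S1 H0 by (simp add: \<beta>_def \<delta>_def S_def V_def H_def P_def field_simps power2_eq_square power3_eq_cube)
  have mono: "exp (- (real n * r)) \<le> exp (- (real n * \<beta>))" if "\<beta> \<le> r" for r
    using that by (simp add: mult_left_mono)
  define Lo where "Lo s = {X. 0 < P s \<and> P s < 1 \<and>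
      real (card {j\<in>{..<n}. X j = s}) \<le> real n * (P s - \<delta> / (- ln (P s)))}" for s
  define Up where "Up s = {X. real n * (P s + \<delta>) \<le> real (card {j\<in>{..<n}. X j = s})}" for s
  define E where "E = {X :: nat \<Rightarrow> 'a. entropy (pmf d) - entropy (empirical n X) > \<epsilon>}"
  have sub: "E \<subseteq> (\<Union>s\<in>UNIV. Lo s \<union> Up s)"
  proof
    fix X assume "X \<in> E"
    define Q where "Q = empirical n X"
    have Qb: "0 \<le> Q s" "Q s \<le> 1" for s using empirical_bounds[OF n0] by (auto simp: Q_def)
    have Qc: "Q s * real n = real (card {j\<in>{..<n}. X j = s})" for s
      using n0 by (simp add: Q_def empirical_def)
    have "H - entropy Q = (\<Sum>s\<in>UNIV. Q s * ln (Q s) - P s * ln (P s))"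
      by (simp add: H_def entropy_def sum_subtractf)
    moreover have "H - entropy Q > \<epsilon>" using \<open>X \<in> E\<close> by (simp add: E_def H_def P_def Q_def)
    ultimately have "\<exists>s. Q s * ln (Q s) - P s * ln (P s) > \<delta>"
    proof -
      assume a: "H - entropy Q = (\<Sum>s\<in>UNIV. Q s * ln (Q s) - P s * ln (P s))" "H - entropy Q > \<epsilon>"
      show ?thesis
      proof (rule ccontr)
        assume "\<not> ?thesis"
        then have "(\<Sum>s\<in>UNIV. Q s * ln (Q s) - P s * ln (P s)) \<le> (\<Sum>s\<in>(UNIV::'a set). \<delta>)"
          by (intro sum_mono) (simp add: not_less)
        also have "\<dots> = \<epsilon>" using S1 by (simp add: \<delta>_def S_def)
        finally show False using a by simp
      qed
    qed
    then obtain s where s: "Q s * ln (Q s) - P s * ln (P s) > \<delta>" by blast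
    show "X \<in> (\<Union>s\<in>UNIV. Lo s \<union> Up s)"
    proof (cases "P s \<le> Q s")
      case True
      have "Q s * ln (Q s) - P s * ln (P s) \<le> Q s - P s"
        using True Qb nn by (intro D_upper) auto
      then have "P s + \<delta> \<le> Q s" using s by simp
      then have "real n * (P s + \<delta>) \<le> Q s * real n" using n0 by (simp add: mult.commute)
      then have "X \<in> Up s" using Qc by (simp add: Up_def)
      then show ?thesis by blast
    next
      case False
      have "Q s * ln (Q s) - P s * ln (P s) \<le> - ((P s - Q s) * ln (P s))"
        using False Qb by (intro D_lower) auto
      then have lt: "\<delta> < (P s - Q s) * (- ln (P s))" using s by simp
      have Pp: "0 < P s" using False Qb(1)[of s] by simp
      have lnp: "0 < - ln (P s)"
      proof (rule ccontr)
        assume "\<not> 0 < - ln (P s)"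
        then have "(P s - Q s) * (- ln (P s)) \<le> 0" using False by (simp add: mult_nonneg_nonpos)
        then show False using lt \<delta>0 by simp
      qed
      then have P1: "P s < 1" using Pp by simp
      have "\<delta> / (- ln (P s)) < P s - Q s" by (subst pos_divide_less_eq[OF lnp]) (rule lt)
      then have "Q s \<le> P s - \<delta> / (- ln (P s))" by simp
      then have "Q s * real n \<le> real n * (P s - \<delta> / (- ln (P s)))"
        using n0 by (simp add: mult.commute mult_left_mono)
      then have "X \<in> Lo s" using Qc Pp P1 by (simp add: Lo_def)
      then show ?thesis by blast
    qed
  qed
  have boundLo: "measure_pmf.prob (iid_sample n d) (Lo s) \<le> exp (- (real n * \<beta>))" for s
  proof (cases "0 < P s \<and> P s < 1")
    case False
    then have "Lo s = {}" by (auto simp: Lo_def)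
    then show ?thesis by simp
  next
    case True
    define u where "u = \<delta> / (- ln (P s))"
    have lnp: "0 < - ln (P s)" using True by simp
    have u0: "0 \<le> u" unfolding u_def using \<delta>0 lnp by (intro divide_nonneg_pos) auto
    have "Lo s = {X. real (card {j\<in>{..<n}. X j = s}) \<le> real n * (P s - u)}"
      using True by (simp add: Lo_def u_def)
    then have "measure_pmf.prob (iid_sample n d) (Lo s) =
               measure_pmf.prob (binomial_pmf n (P s)) {k. real k \<le> real n * (P s - u)}"
      using prob_single[of n d "\<lambda>k. real k \<le> real n * (P s - u)" s] unfolding P_def by simp
    also have "\<dots> \<le> exp (- (real n * u\<^sup>2 / (2 * P s)))"
      using True u0 by (intro chernoff_lower) auto
    also have "\<dots> = exp (- (real n * (u\<^sup>2 / (2 * P s))))" by simp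
    also have "\<dots> \<le> exp (- (real n * \<beta>))"
    proof (rule mono)
      have kI: "P s * (ln (P s))\<^sup>2 * V \<le> S * H\<^sup>2"
        using F(10)[of s] True by (simp add: V_def S_def H_def)
      have u2: "u\<^sup>2 / (2 * P s) = \<delta>\<^sup>2 / (2 * (P s * (ln (P s))\<^sup>2))"
        using lnp by (simp add: u_def power_divide power2_eq_square field_simps)
      have pos1: "0 < 2 * S * H\<^sup>2" using S1 H0 by simp
      have pos2: "0 < 2 * (P s * (ln (P s))\<^sup>2)" using True lnp by simp
      have "\<delta>\<^sup>2 * V * (2 * (P s * (ln (P s))\<^sup>2)) = 2 * \<delta>\<^sup>2 * (P s * (ln (P s))\<^sup>2 * V)"
        by (simp add: algebra_simps)
      also have "\<dots> \<le> 2 * \<delta>\<^sup>2 * (S * H\<^sup>2)" using kI by (intro mult_left_mono) auto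
      also have "\<dots> = \<delta>\<^sup>2 * (2 * S * H\<^sup>2)" by (simp add: algebra_simps)
      finally have "\<beta> \<le> \<delta>\<^sup>2 / (2 * (P s * (ln (P s))\<^sup>2))"
        unfolding \<beta>_def by (rule cross[OF pos1 pos2])
      then show "\<beta> \<le> u\<^sup>2 / (2 * P s)" using u2 by simp
    qed
    finally show ?thesis .
  qed
  have boundUp: "measure_pmf.prob (iid_sample n d) (Up s) \<le> exp (- (real n * \<beta>))" for s
  proof (cases "s = t0")
    case True
    have Ps: "P s = 1 - m" using True F(11) by (simp add: m_def)
    have "Up s = {X. real (n - card {j\<in>{..<n}. X j = s}) \<le> real n * ((1 - P s) - \<delta>)}"
    proof -
      have "real n * (P s + \<delta>) \<le> real (card {j\<in>{..<n}. X j = s}) \<longleftrightarrow>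
            real (n - card {j\<in>{..<n}. X j = s}) \<le> real n * ((1 - P s) - \<delta>)" for X
        using card_count_le[of n X s] by (simp add: of_nat_diff algebra_simps)
      then show ?thesis unfolding Up_def by blast
    qed
    then have "measure_pmf.prob (iid_sample n d) (Up s) =
               measure_pmf.prob (binomial_pmf n (1 - P s)) {k. real k \<le> real n * ((1 - P s) - \<delta>)}"
      using prob_compl_count[of n d "\<lambda>k. real k \<le> real n * ((1 - P s) - \<delta>)" s] unfolding P_def by simp
    also have "\<dots> \<le> exp (- (real n * \<delta>\<^sup>2 / (2 * (1 - P s))))"
      using m0 Ps \<delta>0 nn[of s] by (intro chernoff_lower) auto
    also have "\<dots> = exp (- (real n * (\<delta>\<^sup>2 / (2 * m))))" using Ps by simp
    also have "\<dots> \<le> exp (- (real n * \<beta>))"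
    proof (rule mono)
      have kU: "2 * m * V \<le> S * H\<^sup>2" using F(9) by (simp add: m_def V_def S_def H_def)
      have pos1: "0 < 2 * S * H\<^sup>2" using S1 H0 by simp
      have pos2: "0 < 2 * m" using m0 by simp
      have "\<delta>\<^sup>2 * V * (2 * m) = \<delta>\<^sup>2 * (2 * m * V)" by (simp add: algebra_simps)
      also have "\<dots> \<le> \<delta>\<^sup>2 * (S * H\<^sup>2)" using kU by (intro mult_left_mono) auto
      also have "\<dots> \<le> \<delta>\<^sup>2 * (2 * S * H\<^sup>2)" using S1 H0 by (intro mult_left_mono) auto
      finally show "\<beta> \<le> \<delta>\<^sup>2 / (2 * m)"
        unfolding \<beta>_def by (rule cross[OF pos1 pos2])
    qed
    finally show ?thesis .
  next
    case False
    have Pm: "P s \<le> m" using F(6)[OF False] by (simp add: m_def)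
    have eq: "measure_pmf.prob (iid_sample n d) (Up s) =
          measure_pmf.prob (binomial_pmf n (P s)) {k. real n * (P s + \<delta>) \<le> real k}"
      using prob_single[of n d "\<lambda>k. real n * (P s + \<delta>) \<le> real k" s] unfolding P_def Up_def by simp
    show ?thesis
    proof (cases "2 * P s \<le> \<delta>")
      case True
      have "measure_pmf.prob (binomial_pmf n (P s)) {k. real n * (P s + \<delta>) \<le> real k}
            \<le> exp (real n * (- 1 * \<delta> + P s * (exp 1 - 1 - 1)))"
        using nn F(1) \<delta>0 by (intro chernoff_upper) (auto simp: less_imp_le)
      also have "\<dots> \<le> exp (- (real n * \<beta>))"
      proof -
        have e3: "exp (1::real) \<le> 3" using exp_bound[of 1] by simp
        have "P s * (exp 1 - 1 - 1) \<le> P s * 1"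
          using e3 nn[of s] by (intro mult_left_mono) auto
        then have A: "- 1 * \<delta> + P s * (exp 1 - 1 - 1) \<le> - (\<delta> / 2)" using True by simp
        have pos1: "0 < 2 * S * H\<^sup>2" using S1 H0 by simp
        have "\<delta> * V \<le> H * H" using \<delta>H F(4) F(5) \<delta>0
          by (intro mult_mono) (auto simp: V_def H_def)
        also have "\<dots> \<le> S * H\<^sup>2" using S1 H0 by (simp add: power2_eq_square)
        finally have dv: "\<delta> * V \<le> S * H\<^sup>2" .
        have "\<delta>\<^sup>2 * V * 2 = \<delta> * 2 * (\<delta> * V)" by (simp add: power2_eq_square algebra_simps)
        also have "\<dots> \<le> \<delta> * 2 * (S * H\<^sup>2)" using dv \<delta>0 by (intro mult_left_mono) auto
        also have "\<dots> = \<delta> * (2 * S * H\<^sup>2)" by (simp add: algebra_simps)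
        finally have c2: "\<delta>\<^sup>2 * V * 2 \<le> \<delta> * (2 * S * H\<^sup>2)" .
        have "\<beta> \<le> \<delta> / 2" unfolding \<beta>_def by (rule cross[OF pos1 _ c2]) simp
        then have "- 1 * \<delta> + P s * (exp 1 - 1 - 1) \<le> - \<beta>" using A by simp
        then have "real n * (- 1 * \<delta> + P s * (exp 1 - 1 - 1)) \<le> real n * (- \<beta>)"
          by (intro mult_left_mono) auto
        then show ?thesis by simp
      qed
      finally show ?thesis using eq by simp
    next
      case False
      then have Pp: "0 < P s" using \<delta>0 by simp
      define l where "l = \<delta> / (2 * P s)"
      have l0: "0 \<le> l" using \<delta>0 Pp by (simp add: l_def)
      have l1: "l \<le> 1" using False Pp by (simp add: l_def divide_le_eq)
      have "measure_pmf.prob (binomial_pmf n (P s)) {k. real n * (P s + \<delta>) \<le> real k}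
            \<le> exp (real n * (- l * \<delta> + P s * (exp l - 1 - l)))"
        using nn F(1) \<delta>0 l0 by (intro chernoff_upper) (auto simp: less_imp_le)
      also have "\<dots> \<le> exp (- (real n * \<beta>))"
      proof -
        have "exp l - 1 - l \<le> l\<^sup>2" using exp_bound[OF l0 l1] by simp
        then have "P s * (exp l - 1 - l) \<le> P s * l\<^sup>2" using Pp by (intro mult_left_mono) auto
        moreover have "- l * \<delta> + P s * l\<^sup>2 = - (\<delta>\<^sup>2 / (4 * P s))"
          using Pp by (simp add: l_def power2_eq_square field_simps)
        ultimately have A: "- l * \<delta> + P s * (exp l - 1 - l) \<le> - (\<delta>\<^sup>2 / (4 * P s))" by simp
        have pos1: "0 < 2 * S * H\<^sup>2" using S1 H0 by simp
        have pos2: "0 < 4 * P s" using Pp by simp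
        have kU: "2 * m * V \<le> S * H\<^sup>2" using F(9) by (simp add: m_def V_def S_def H_def)
        have "2 * P s * V \<le> 2 * m * V" using Pm F(5) by (intro mult_right_mono) (auto simp: V_def)
        then have kP: "2 * P s * V \<le> S * H\<^sup>2" using kU by simp
        have "\<delta>\<^sup>2 * V * (4 * P s) = 2 * \<delta>\<^sup>2 * (2 * P s * V)" by (simp add: algebra_simps)
        also have "\<dots> \<le> 2 * \<delta>\<^sup>2 * (S * H\<^sup>2)" using kP by (intro mult_left_mono) auto
        also have "\<dots> = \<delta>\<^sup>2 * (2 * S * H\<^sup>2)" by (simp add: algebra_simps)
        finally have "\<beta> \<le> \<delta>\<^sup>2 / (4 * P s)" unfolding \<beta>_def by (rule cross[OF pos1 pos2])
        then have "- l * \<delta> + P s * (exp l - 1 - l) \<le> - \<beta>" using A by simp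
        then have "real n * (- l * \<delta> + P s * (exp l - 1 - l)) \<le> real n * (- \<beta>)"
          by (intro mult_left_mono) auto
        then show ?thesis by simp
      qed
      finally show ?thesis using eq by simp
    qed
  qed
  have "measure_pmf.prob (iid_sample n d) E \<le> measure_pmf.prob (iid_sample n d) (\<Union>s\<in>UNIV. Lo s \<union> Up s)"
    by (rule measure_pmf.finite_measure_mono[OF sub]) simp
  also have "\<dots> \<le> (\<Sum>s\<in>UNIV. measure_pmf.prob (iid_sample n d) (Lo s \<union> Up s))"
    by (rule measure_pmf.finite_measure_subadditive_finite) auto
  also have "\<dots> \<le> (\<Sum>s\<in>(UNIV::'a set). 2 * exp (- (real n * \<beta>)))"
  proof (rule sum_mono)
    fix s :: 'a
    have "measure_pmf.prob (iid_sample n d) (Lo s \<union> Up s)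
          \<le> measure_pmf.prob (iid_sample n d) (Lo s) + measure_pmf.prob (iid_sample n d) (Up s)"
      by (rule measure_Un_le) auto
    then show "measure_pmf.prob (iid_sample n d) (Lo s \<union> Up s) \<le> 2 * exp (- (real n * \<beta>))"
      using boundLo[of s] boundUp[of s] by simp
  qed
  also have "\<dots> = 2 * S * exp (- (real n * \<beta>))" by (simp add: S_def)
  finally show ?thesis using \<beta>eq by (simp add: E_def S_def)
qed

lemma V_pos_of_H:
  fixes d :: "'a::finite pmf"
  assumes "0 < entropy (pmf d)"
  shows "0 < cat_var (pmf d)"
proof (rule ccontr)
  assume "\<not> 0 < cat_var (pmf d)"
  moreover have "0 \<le> cat_var (pmf d)" unfolding cat_var_def
    by (intro sum_nonneg) (simp add: pmf_le_1)
  ultimately have "cat_var (pmf d) = 0" by simp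
  then have z: "\<forall>t\<in>UNIV. pmf d t * (1 - pmf d t) = 0"
    unfolding cat_var_def by (subst sum_nonneg_eq_0_iff[symmetric]) (auto simp: pmf_le_1)
  have z1: "\<And>t. pmf d t * ln (pmf d t) = 0"
  proof -
    fix t
    have "pmf d t = 0 \<or> pmf d t = 1" using z by auto
    then show "pmf d t * ln (pmf d t) = 0" by auto
  qed
  have "(\<Sum>t\<in>UNIV. pmf d t * ln (pmf d t)) = 0" by (rule sum.neutral) (use z1 in blast)
  then have "entropy (pmf d) = 0" by (simp add: entropy_def)
  then show False using assms by simp
qed

theorem theorem4p1:
  fixes d :: "'a::finite pmf" and n :: nat and \<epsilon> :: real
  assumes "n > 0" and "\<epsilon> > 0"
  shows "measure_pmf.prob (iid_sample n d)
           {X. entropy (pmf d) - entropy (empirical n X) > \<epsilon>}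
         \<le> 2 * real CARD('a) * exp (- real n * (\<epsilon>\<^sup>2 * cat_var (pmf d))
                 / (2 * real CARD('a) ^ 3 * (entropy (pmf d))\<^sup>2))
       \<and> (\<forall>\<delta>. 0 < \<delta> \<and> \<delta> < 1 \<and>
           real n \<ge> 2 * real CARD('a) ^ 3 * (entropy (pmf d))\<^sup>2 / (\<epsilon>\<^sup>2 * cat_var (pmf d))
                      * ln (2 * real CARD('a) / \<delta>) \<longrightarrow>
           measure_pmf.prob (iid_sample n d)
             {X. entropy (pmf d) - entropy (empirical n X) > \<epsilon>} \<le> \<delta>)"
proof -
  define E where "E = {X :: nat \<Rightarrow> 'a. entropy (pmf d) - entropy (empirical n X) > \<epsilon>}"
  define H where "H = entropy (pmf d)"
  define V where "V = cat_var (pmf d)"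
  define S where "S = real CARD('a)"
  have S1: "1 \<le> S" by (simp add: S_def Suc_le_eq)
  have empty: "E = {}" if "H \<le> \<epsilon>"
  proof -
    have e0: "\<And>X :: nat \<Rightarrow> 'a. 0 \<le> entropy (empirical n X)"
      using assms(1) by (rule entropy_empirical_nonneg)
    show ?thesis unfolding E_def
    proof safe
      fix X :: "nat \<Rightarrow> 'a"
      assume "\<epsilon> < entropy (pmf d) - entropy (empirical n X)"
      then show "X \<in> {}" using e0[of X] that by (simp add: H_def)
    qed

  qed
  have part1: "measure_pmf.prob (iid_sample n d) E
      \<le> 2 * S * exp (- real n * (\<epsilon>\<^sup>2 * V) / (2 * S ^ 3 * H\<^sup>2))"
  proof (cases "\<epsilon> < H")
    case True
    then show ?thesis using core[OF assms True[unfolded H_def]]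
      by (simp add: E_def S_def V_def H_def)
  next
    case False
    then have "E = {}" using empty by simp
    then show ?thesis using S1 by simp
  qed
  have part2: "measure_pmf.prob (iid_sample n d) E \<le> \<delta>"
    if h: "0 < \<delta>" "\<delta> < 1" "real n \<ge> 2 * S ^ 3 * H\<^sup>2 / (\<epsilon>\<^sup>2 * V) * ln (2 * S / \<delta>)" for \<delta>
  proof (cases "\<epsilon> < H")
    case False
    then have "E = {}" using empty by simp
    then show ?thesis using h by simp
  next
    case True
    have H0: "0 < H" using True assms by simp
    have V0: "0 < V" using V_pos_of_H[of d] H0 by (simp add: V_def H_def)
    define K where "K = 2 * S ^ 3 * H\<^sup>2 / (\<epsilon>\<^sup>2 * V)"
    have K0: "0 < K" using S1 H0 V0 assms by (simp add: K_def)
    have kl: "K * ln (2 * S / \<delta>) \<le> real n"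
      using h(3) by (simp only: K_def)
    have "ln (2 * S / \<delta>) \<le> real n / K"
      using kl K0 by (simp add: le_divide_eq mult.commute)
    also have "real n / K = real n * (\<epsilon>\<^sup>2 * V) / (2 * S ^ 3 * H\<^sup>2)"
      by (simp add: K_def)
    finally have l: "- real n * (\<epsilon>\<^sup>2 * V) / (2 * S ^ 3 * H\<^sup>2) \<le> - ln (2 * S / \<delta>)" by simp
    have "- ln (2 * S / \<delta>) = ln (\<delta> / (2 * S))"
      using h S1 by (simp add: ln_div)
    then have "exp (- real n * (\<epsilon>\<^sup>2 * V) / (2 * S ^ 3 * H\<^sup>2)) \<le> \<delta> / (2 * S)"
      using l h S1 by (metis exp_le_cancel_iff exp_ln divide_pos_pos mult_pos_pos zero_less_numeral
          less_le_trans zero_less_one)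
    then have "2 * S * exp (- real n * (\<epsilon>\<^sup>2 * V) / (2 * S ^ 3 * H\<^sup>2)) \<le> 2 * S * (\<delta> / (2 * S))"
      using S1 by (intro mult_left_mono) auto
    also have "\<dots> = \<delta>" using S1 by simp
    finally show ?thesis using part1 by linarith
  qed
  show ?thesis
    using part1 part2 unfolding E_def S_def V_def H_def by blast
qed

end
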